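(* Let $M,N,p,r\ge1$. If at least one of $i$, $a$, $b$ has all its entries equal, then $(E_x)$ holds for all $x$. The normalized number of such triples, $$\alpha_p^r(M,N)=\frac{1}{M^{p+r}N^p}\#\{(i,a,b):\ i\text{ or }a\text{ or }b\text{ is constant}\},$$ equals $1-\frac{(M^p-M)(M^r-M)(N^p-N)}{M^{p+r}N^p}$, and $\alpha_p^r(M,N)=d_p^r(M,N)$ whenever $M=1$, or $N=1$, or $r=1$, or $p\le 2$.
   Context: For integers $M,N,p,r\ge1$, consider triples $(i,a,b)$ with $i=(i_1,\dots,i_r)\in\mathbb Z_M^r$, $a=(a_1,\dots,a_p)\in\mathbb Z_M^p$, $b=(b_1,\dots,b_p)\in\mathbb Z_N^p$, with cyclic conventions $i_{r+1}=i_1$, $b_{p+1}=b_1$. For $x\in\{1,\dots,r\}$, condition $(E_x)$ says that the multisets $\{(i_x+a_y,b_y),(i_{x+1}+a_y,b_{y+1}):y=1,\dots,p\}$ and $\{(i_x+a_y,b_{y+1}),(i_{x+1}+a_y,b_y):y=1,\dots,p\}$ of elements of $\mathbb Z_M\times\mathbb Z_N$ (counted with multiplicity) coincide. Define $d_p^r(M,N)=\frac{1}{M^{p+r}N^p}\#\{(i,a,b):(E_x)\text{ holds for all }x\}$. A tuple is called constant if all its entries are equal. *)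

theory Defs
  imports Main "HOL-Library.Multiset" "HOL-Library.FuncSet" Complex_Main
begin

text \<open>Z_M is represented by {0..<M} with arithmetic mod M. A tuple
 (i_1,...,i_r) in Z_M^r is a function in PiE {..<r} (\<lambda>_. {..<M}),
 with 0-based indices; the cyclic successor of x is Suc x mod r.\<close>

definition triples :: "nat \<Rightarrow> nat \<Rightarrow> nat \<Rightarrow> nat \<Rightarrow>
    ((nat \<Rightarrow> nat) \<times> (nat \<Rightarrow> nat) \<times> (nat \<Rightarrow> nat)) set" where
  "triples M N p r = PiE {..<r} (\<lambda>_. {..<M}) \<times> PiE {..<p} (\<lambda>_. {..<M}) \<times> PiE {..<p} (\<lambda>_. {..<N})"

definition cond_E :: "nat \<Rightarrow> nat \<Rightarrow> nat \<Rightarrow> (nat \<Rightarrow> nat) \<Rightarrow> (nat \<Rightarrow> nat) \<Rightarrow> (nat \<Rightarrow> nat) \<Rightarrow> nat \<Rightarrow> bool" where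
  "cond_E M p r i a b x \<longleftrightarrow>
     image_mset (\<lambda>y. ((i x + a y) mod M, b y)) (mset_set {..<p})
   + image_mset (\<lambda>y. ((i (Suc x mod r) + a y) mod M, b (Suc y mod p))) (mset_set {..<p})
   = image_mset (\<lambda>y. ((i x + a y) mod M, b (Suc y mod p))) (mset_set {..<p})
   + image_mset (\<lambda>y. ((i (Suc x mod r) + a y) mod M, b y)) (mset_set {..<p})"

definition is_constant :: "nat \<Rightarrow> (nat \<Rightarrow> nat) \<Rightarrow> bool" where
  "is_constant n f \<longleftrightarrow> (\<forall>j<n. \<forall>k<n. f j = f k)"

definition d_pr :: "nat \<Rightarrow> nat \<Rightarrow> nat \<Rightarrow> nat \<Rightarrow> real" where
  "d_pr p r M N = real (card {(i,a,b) \<in> triples M N p r. \<forall>x<r. cond_E M p r i a b x})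
      / (real M ^ (p + r) * real N ^ p)"

definition alpha_pr :: "nat \<Rightarrow> nat \<Rightarrow> nat \<Rightarrow> nat \<Rightarrow> real" where
  "alpha_pr p r M N = real (card {(i,a,b) \<in> triples M N p r.
        is_constant r i \<or> is_constant p a \<or> is_constant p b})
      / (real M ^ (p + r) * real N ^ p)"

end

theory Submission
  imports Defs
begin

lemma mset2: "mset_set {..<2::nat} = {#0, 1#}"
  by (simp add: numeral_2_eq_2 lessThan_Suc)

lemma suc_mod_perm:
  assumes "p \<ge> 1"
  shows "image_mset (\<lambda>y. Suc y mod p) (mset_set {..<p}) = mset_set {..<p}"
proof -
  have inj: "inj_on (\<lambda>y. Suc y mod p) {..<p}"
    unfolding inj_on_def
    by (metis Suc_inject assms le_add_diff_inverse2 lessThan_iff less_Suc_eq less_le mod_less mod_self nat.simps(3) not_less_eq plus_1_eq_Suc)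
  have sub: "(\<lambda>y. Suc y mod p) ` {..<p} \<subseteq> {..<p}" using assms by auto
  have "(\<lambda>y. Suc y mod p) ` {..<p} = {..<p}"
    using inj sub by (simp add: card_image card_subset_eq)
  then show ?thesis using inj by (simp add: image_mset_mset_set)
qed

lemma shift_eq:
  assumes "p \<ge> 1"
  shows "image_mset (\<lambda>y. h (Suc y mod p)) (mset_set {..<p}) = image_mset h (mset_set {..<p})"
proof -
  have "image_mset (\<lambda>y. h (Suc y mod p)) (mset_set {..<p}) = image_mset h (image_mset (\<lambda>y. Suc y mod p) (mset_set {..<p}))"
    by (simp add: multiset.map_comp o_def)
  then show ?thesis using suc_mod_perm[OF assms] by simp
qed

lemma const_E:
  assumes p: "p \<ge> 1" and r: "r \<ge> 1" and x: "x < r"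
    and c: "is_constant r i \<or> is_constant p a \<or> is_constant p b"
  shows "cond_E M p r i a b x"
proof -
  consider "is_constant r i" | "is_constant p a" | "is_constant p b" using c by blast
  then show ?thesis
  proof cases
    case 1
    have "i (Suc x mod r) = i x" using 1 x r unfolding is_constant_def
      by (meson mod_less_divisor order_less_le_trans zero_less_one)
    then show ?thesis unfolding cond_E_def by (simp add: add.commute)
  next
    case 2
    have a: "\<And>y. y \<in># mset_set {..<p} \<Longrightarrow> a y = a 0"
      using 2 p unfolding is_constant_def
      by (metis elem_mset_set finite_lessThan lessThan_iff less_le_trans zero_less_one)
    have e: "\<And>u. image_mset (\<lambda>y. ((u + a y) mod M, b y)) (mset_set {..<p})
        = image_mset (\<lambda>y. ((u + a y) mod M, b (Suc y mod p))) (mset_set {..<p})"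
    proof -
      fix u
      have "image_mset (\<lambda>y. ((u + a y) mod M, b y)) (mset_set {..<p})
          = image_mset (\<lambda>y. ((u + a 0) mod M, b y)) (mset_set {..<p})"
        using a by (intro image_mset_cong) (metis (no_types))
      also have "\<dots> = image_mset (\<lambda>y. ((u + a 0) mod M, b (Suc y mod p))) (mset_set {..<p})"
        using shift_eq[OF p, of "\<lambda>y. ((u + a 0) mod M, b y)"] by simp
      also have "\<dots> = image_mset (\<lambda>y. ((u + a y) mod M, b (Suc y mod p))) (mset_set {..<p})"
        using a by (intro image_mset_cong) (metis (no_types))
      finally show "?thesis u" .
    qed
    show ?thesis unfolding cond_E_def
      by (simp only: e)
  next
    case 3
    have b: "\<And>y. y \<in># mset_set {..<p} \<Longrightarrow> b (Suc y mod p) = b y"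
      using 3 p unfolding is_constant_def
      by (metis elem_mset_set finite_lessThan lessThan_iff mod_less_divisor less_le_trans zero_less_one)
    have e: "\<And>u. image_mset (\<lambda>y. ((u + a y) mod M, b (Suc y mod p))) (mset_set {..<p})
        = image_mset (\<lambda>y. ((u + a y) mod M, b y)) (mset_set {..<p})"
      by (rule image_mset_cong) (simp add: b)
    show ?thesis unfolding cond_E_def by (simp only: e)
  qed
qed

lemma card_cs:
  assumes "n \<ge> 1"
  shows "card {f \<in> PiE {..<n} (\<lambda>_. {..<K::nat}). is_constant n f} = K"
proof -
  have n0: "0 < n" using assms by simp
  have "{f \<in> PiE {..<n} (\<lambda>_. {..<K::nat}). is_constant n f} = (\<lambda>c. restrict (\<lambda>_. c) {..<n}) ` {..<K}"
  proof (rule set_eqI, rule iffI)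
    fix f assume f: "f \<in> {f \<in> PiE {..<n} (\<lambda>_. {..<K::nat}). is_constant n f}"
    have fP: "f \<in> PiE {..<n} (\<lambda>_. {..<K::nat})" using f by blast
    have fc: "\<forall>j<n. \<forall>k<n. f j = f k" using f unfolding is_constant_def by blast
    have "f = restrict (\<lambda>_. f 0) {..<n}"
    proof
      fix j show "f j = restrict (\<lambda>_. f 0) {..<n} j"
      proof (cases "j < n")
        case True
        then have "f j = f 0" using fc n0 by blast
        then show ?thesis using True by simp
      next
        case False
        then have "f j = undefined" using PiE_arb[OF fP] by simp
        then show ?thesis using False by simp
      qed
    qed
    moreover have "f 0 \<in> {..<K}" using PiE_mem[OF fP] n0 by simp
    ultimately show "f \<in> (\<lambda>c. restrict (\<lambda>_. c) {..<n}) ` {..<K}" by blast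
  next
    fix g assume "g \<in> (\<lambda>c. restrict (\<lambda>_. c) {..<n}) ` {..<K}"
    then obtain c where c: "c < K" and g: "g = restrict (\<lambda>_. c) {..<n}" by blast
    have "g \<in> PiE {..<n} (\<lambda>_. {..<K::nat})" unfolding g using c by simp
    moreover have "is_constant n g" unfolding is_constant_def g by simp
    ultimately show "g \<in> {f \<in> PiE {..<n} (\<lambda>_. {..<K::nat}). is_constant n f}" by blast
  qed
  moreover have "inj_on (\<lambda>c. restrict (\<lambda>_. c) {..<n}) {..<K}"
  proof (rule inj_onI)
    fix c d assume "restrict (\<lambda>_. c) {..<n} = restrict (\<lambda>_. (d::nat)) {..<n}"
    then have "restrict (\<lambda>_. c) {..<n} 0 = restrict (\<lambda>_. d) {..<n} 0" by simp
    then show "c = d" using n0 by simp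
  qed
  ultimately show ?thesis by (simp add: card_image)
qed

lemma card_nc:
  assumes "n \<ge> 1"
  shows "card {f \<in> PiE {..<n} (\<lambda>_. {..<K::nat}). \<not> is_constant n f} = K ^ n - K"
proof -
  let ?A = "PiE {..<n} (\<lambda>_. {..<K::nat})"
  have "{f \<in> ?A. \<not> is_constant n f} = ?A - {f \<in> ?A. is_constant n f}" by auto
  moreover have "card ?A = K ^ n" by (simp add: card_PiE)
  moreover have "finite ?A" by (simp add: finite_PiE)
  ultimately show ?thesis using card_cs[OF assms, of K]
    by (simp add: card_Diff_subset)
qed

lemma modcancel: "(u::nat) < M \<Longrightarrow> v < M \<Longrightarrow> (u + c) mod M = (v + c) mod M \<Longrightarrow> u = v"
proof -
  assume u: "u < M" and v: "v < M" and e: "(u + c) mod M = (v + c) mod M"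
  have "(int u + int c) mod int M = (int v + int c) mod int M"
    using e by (metis of_nat_add zmod_int)
  then have "(int u + int c - int c) mod int M = (int v + int c - int c) mod int M"
    by (rule mod_diff_cong) simp
  then have "int u mod int M = int v mod int M" by simp
  then show "u = v" using u v by simp
qed

lemma modcancel2: "(u::nat) < M \<Longrightarrow> v < M \<Longrightarrow> (c + u) mod M = (c + v) mod M \<Longrightarrow> u = v"
  using modcancel[of u M v c] by (simp add: add.commute)

lemma chain_const:
  assumes "\<forall>x<r. i (Suc x mod r) = (i x :: nat)"
  shows "is_constant r i"
proof -
  have "\<forall>k<r. i k = i 0"
  proof (intro allI impI)
    fix k assume "k < r" then show "i k = i 0"
    proof (induction k)
      case 0 then show ?case by simp
    next
      case (Suc k)
      have k: "k < r" using Suc.prems by simp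
      have "i (Suc k mod r) = i k" using assms k by blast
      moreover have "Suc k mod r = Suc k" using Suc.prems by simp
      ultimately have "i (Suc k) = i k" by simp
      then show ?case using Suc by simp
    qed
  qed
  then show ?thesis unfolding is_constant_def by metis
qed

lemma img2: "image_mset f (mset_set {..<2::nat}) = {#f 0, f 1#}"
  by (simp add: mset2)

lemma sm2: "Suc 0 mod 2 = (1::nat)" "Suc 1 mod 2 = (0::nat)" by simp_all

lemma cnt_lemma:
  assumes "x2 \<noteq> x1" "B1 \<noteq> B0"
    "count ({#(x1,B0),(x2,B1)#} + {#(y1,B1),(y2,B0)#}) (x1,B0) = count ({#(x1,B1),(x2,B0)#} + {#(y1,B0),(y2,B1)#}) (x1,B0)"
  shows "y1 = x1"
proof (rule ccontr)
  assume n: "y1 \<noteq> x1"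
  have "count ({#(x1,B1),(x2,B0)#} + {#(y1,B0),(y2,B1)#}) (x1,B0) = 0"
    using assms(1,2) n by auto
  moreover have "count ({#(x1,B0),(x2,B1)#} + {#(y1,B1),(y2,B0)#}) (x1,B0) \<ge> 1"
    by simp
  ultimately show False using assms(3) by simp
qed

lemma const2: "is_constant 2 f \<longleftrightarrow> f 0 = f 1"
  unfolding is_constant_def by (auto simp: less_2_cases_iff)

lemma p2_case:
  assumes i: "i \<in> PiE {..<r} (\<lambda>_. {..<M})" and a: "a \<in> PiE {..<2} (\<lambda>_. {..<M})"
    and b: "b \<in> PiE {..<2} (\<lambda>_. {..<N})"
    and E: "\<forall>x<r. cond_E M 2 r i a b x"
  shows "is_constant r i \<or> is_constant 2 a \<or> is_constant 2 b"
proof (rule ccontr)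
  assume nc: "\<not> ?thesis"
  have a01: "a 0 \<noteq> a 1"
  proof
    assume "a 0 = a 1"
    then have "is_constant 2 a" by (simp add: const2)
    then show False using nc by blast
  qed
  have b01: "b 0 \<noteq> b 1"
  proof
    assume "b 0 = b 1"
    then have "is_constant 2 b" by (simp add: const2)
    then show False using nc by blast
  qed
  have aM: "a 0 < M" "a 1 < M" using PiE_mem[OF a, of 0] PiE_mem[OF a, of 1] by simp_all
  have "\<forall>x<r. i (Suc x mod r) = i x"
  proof (intro allI impI)
    fix x assume x: "x < r"
    have ix: "i x < M" "i (Suc x mod r) < M" using PiE_mem[OF i, of x] PiE_mem[OF i, of "Suc x mod r"] x by simp_all
    let ?u = "i x" and ?v = "i (Suc x mod r)"
    have c: "cond_E M 2 r i a b x" using E x by blast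
    have "{#((?u + a 0) mod M, b 0), ((?u + a 1) mod M, b 1)#} + {#((?v + a 0) mod M, b 1), ((?v + a 1) mod M, b 0)#}
       = {#((?u + a 0) mod M, b 1), ((?u + a 1) mod M, b 0)#} + {#((?v + a 0) mod M, b 0), ((?v + a 1) mod M, b 1)#}"
      using c unfolding cond_E_def img2 sm2 .
    then have cnt: "count ({#((?u + a 0) mod M, b 0), ((?u + a 1) mod M, b 1)#} + {#((?v + a 0) mod M, b 1), ((?v + a 1) mod M, b 0)#}) ((?u + a 0) mod M, b 0)
       = count ({#((?u + a 0) mod M, b 1), ((?u + a 1) mod M, b 0)#} + {#((?v + a 0) mod M, b 0), ((?v + a 1) mod M, b 1)#}) ((?u + a 0) mod M, b 0)"
      by (simp only:)
    have neq: "(?u + a 1) mod M \<noteq> (?u + a 0) mod M"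
    proof
      assume h: "(?u + a 1) mod M = (?u + a 0) mod M"
      have "a 1 = a 0" by (rule modcancel2[OF aM(2) aM(1) h])
      with a01 show False by simp
    qed
    have "(?v + a 0) mod M = (?u + a 0) mod M"
      by (rule cnt_lemma[OF neq b01[symmetric] cnt])
    then show "?v = ?u" using modcancel[OF ix(2) ix(1)] by blast
  qed
  then have "is_constant r i" by (rule chain_const)
  then show False using nc by blast
qed


lemma E_imp_C:
  assumes S: "(i,a,b) \<in> triples M N p r" and E: "\<forall>x<r. cond_E M p r i a b x"
    and cnd: "M = 1 \<or> N = 1 \<or> r = 1 \<or> p \<le> 2" and p: "p \<ge> 1"
  shows "is_constant r i \<or> is_constant p a \<or> is_constant p b"
proof -
  have i: "i \<in> PiE {..<r} (\<lambda>_. {..<M})" and a: "a \<in> PiE {..<p} (\<lambda>_. {..<M})"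
    and b: "b \<in> PiE {..<p} (\<lambda>_. {..<N})" using S unfolding triples_def by auto
  consider "M = 1" | "N = 1" | "r = 1" | "p = 1" | "p = 2" using cnd p by linarith
  then show ?thesis
  proof cases
    case 1
    have "\<And>j. j < p \<Longrightarrow> a j = 0"
    proof -
      fix j assume "j < p"
      then have "a j \<in> {..<M}" by (intro PiE_mem[OF a]) simp
      then show "a j = 0" using 1 by simp
    qed
    then have "is_constant p a" unfolding is_constant_def by simp
    then show ?thesis by blast
  next
    case 2
    have "\<And>j. j < p \<Longrightarrow> b j = 0"
    proof -
      fix j assume "j < p"
      then have "b j \<in> {..<N}" by (intro PiE_mem[OF b]) simp
      then show "b j = 0" using 2 by simp
    qed
    then have "is_constant p b" unfolding is_constant_def by simp
    then show ?thesis by blast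
  next
    case 3
    then have "is_constant r i" unfolding is_constant_def by simp
    then show ?thesis by blast
  next
    case 4
    then have "is_constant p a" unfolding is_constant_def by simp
    then show ?thesis by blast
  next
    case 5
    show ?thesis using p2_case[of i r M a b N] i a b E 5 by simp
  qed
qed

lemma frac_aux: "(d::real) > 0 \<Longrightarrow> (d - x) / d = 1 - x / d"
  by (simp add: diff_divide_distrib)

theorem proposition3p3:
  fixes M N p r :: nat
  assumes "M \<ge> 1" "N \<ge> 1" "p \<ge> 1" "r \<ge> 1"
  shows "(\<forall>(i,a,b) \<in> triples M N p r.
            (is_constant r i \<or> is_constant p a \<or> is_constant p b)
              \<longrightarrow> (\<forall>x<r. cond_E M p r i a b x))
       \<and> alpha_pr p r M N
           = 1 - (real M ^ p - real M) * (real M ^ r - real M) * (real N ^ p - real N)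
                   / (real M ^ (p + r) * real N ^ p)
       \<and> ((M = 1 \<or> N = 1 \<or> r = 1 \<or> p \<le> 2) \<longrightarrow> alpha_pr p r M N = d_pr p r M N)"
proof (intro conjI)
  let ?S = "triples M N p r"
  let ?C = "{(i,a,b) \<in> triples M N p r. is_constant r i \<or> is_constant p a \<or> is_constant p b}"
  let ?E = "{(i,a,b) \<in> triples M N p r. \<forall>x<r. cond_E M p r i a b x}"
  show P1: "\<forall>(i,a,b) \<in> ?S. (is_constant r i \<or> is_constant p a \<or> is_constant p b)
              \<longrightarrow> (\<forall>x<r. cond_E M p r i a b x)"
    using const_E[OF assms(3) assms(4)] by blast
  let ?NI = "{f \<in> PiE {..<r} (\<lambda>_. {..<M}). \<not> is_constant r f}"
  let ?NA = "{f \<in> PiE {..<p} (\<lambda>_. {..<M}). \<not> is_constant p f}"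
  let ?NB = "{f \<in> PiE {..<p} (\<lambda>_. {..<N}). \<not> is_constant p f}"
  have diff: "?S - ?C = ?NI \<times> ?NA \<times> ?NB" unfolding triples_def by auto
  have finS: "finite ?S" unfolding triples_def by (simp add: finite_PiE)
  have cardS: "card ?S = M ^ r * (M ^ p * N ^ p)"
    unfolding triples_def by (simp add: card_cartesian_product card_PiE)
  have cardD: "card (?S - ?C) = (M ^ r - M) * ((M ^ p - M) * (N ^ p - N))"
    unfolding diff card_cartesian_product card_nc[OF assms(4)] card_nc[OF assms(3)] ..
  have CS: "?C \<subseteq> ?S" by blast
  have finC: "finite ?C" using finS CS by (rule finite_subset[rotated])
  have "card ?S = card (?C \<union> (?S - ?C))" using CS by (simp add: Un_Diff_cancel Un_absorb1)
  also have "\<dots> = card ?C + card (?S - ?C)"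
    by (rule card_Un_disjoint) (use finC finS in auto)
  finally have split: "card ?S = card ?C + card (?S - ?C)" .
  have le1: "M \<le> M ^ r" "M \<le> M ^ p" "N \<le> N ^ p"
    using self_le_power[of M r] self_le_power[of M p] self_le_power[of N p] assms by auto
  have rD: "real (card (?S - ?C)) = (real M ^ p - real M) * (real M ^ r - real M) * (real N ^ p - real N)"
    unfolding cardD using le1 by (simp add: of_nat_diff)
  have rS: "real (card ?S) = real M ^ (p + r) * real N ^ p"
    unfolding cardS by (simp add: power_add)
  have pos: "real M ^ (p + r) * real N ^ p > 0" using assms by simp
  have eqC: "real (card ?C) = real M ^ (p + r) * real N ^ p - (real M ^ p - real M) * (real M ^ r - real M) * (real N ^ p - real N)"
    using split rD rS by linarith
  have "alpha_pr p r M N = real (card ?C) / (real M ^ (p + r) * real N ^ p)"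
    unfolding alpha_pr_def by (rule refl)
  also have "\<dots> = (real M ^ (p + r) * real N ^ p - (real M ^ p - real M) * (real M ^ r - real M) * (real N ^ p - real N)) / (real M ^ (p + r) * real N ^ p)"
    by (subst eqC) (rule refl)
  also have "\<dots> = 1 - (real M ^ p - real M) * (real M ^ r - real M) * (real N ^ p - real N)
                   / (real M ^ (p + r) * real N ^ p)"
    by (rule frac_aux[OF pos])
  finally show "alpha_pr p r M N
           = 1 - (real M ^ p - real M) * (real M ^ r - real M) * (real N ^ p - real N)
                   / (real M ^ (p + r) * real N ^ p)" .
  show "(M = 1 \<or> N = 1 \<or> r = 1 \<or> p \<le> 2) \<longrightarrow> alpha_pr p r M N = d_pr p r M N"
  proof
    assume cnd: "M = 1 \<or> N = 1 \<or> r = 1 \<or> p \<le> 2"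
    have "?E = ?C"
    proof
      show "?E \<subseteq> ?C" using E_imp_C[OF _ _ cnd assms(3)] by blast
      show "?C \<subseteq> ?E" using P1 by blast
    qed
    then show "alpha_pr p r M N = d_pr p r M N" unfolding alpha_pr_def d_pr_def by (simp only:)
  qed
qed

end
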